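(* Let $g_{ij}(x^k)$ be a (non-degenerate) metric on an $n$-dimensional manifold with coordinates $x^k$, and let $V_0(t,x^k)$, $V_1(t,x^k)$ be smooth functions. Consider the perturbed Lagrangian \[ L\left(t,x^{k},\dot{x}^{k},\varepsilon\right)=\frac{1}{2}g_{ij}\dot{x}^{i}\dot{x}^{j}-V_{0}(t,x^{k})-\varepsilon V_{1}(t,x^{k})+O(\varepsilon^{2}). \] Then every first-order approximate Noether point symmetry $X=X_0+\varepsilon X_1$, $X_A=\xi_A(t,x^k)\partial_t+\eta_A^i(t,x^k)\partial_i$ ($A=0,1$), of $L$ is generated from the homothetic algebra of $g_{ij}$: $\xi_0=\xi_0(t)$, $\xi_1=\xi_1(t)$, and the spatial parts $\eta_A^i(t,\cdot)$ (for each fixed $t$) are homothetic (or Killing) vector fields of $g_{ij}$, i.e. $\mathcal{L}_{\eta_A}g_{ij}=\xi_{A,t}\,g_{ij}$ for $A=0,1$.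
   Context: Dot denotes total derivative with respect to $t$; $\partial_i=\partial/\partial x^i$; $\mathcal{L}_{\eta}$ denotes the Lie derivative along $\eta$. A vector field $Y$ is a homothetic vector field (HV) of $g_{ij}$ if $\mathcal{L}_Y g_{ij}=2\psi g_{ij}$ with $\psi$ constant (a Killing vector if $\psi=0$). A first-order approximate Noether point symmetry of $L=L_0+\varepsilon L_1$ (here $L_0=\frac12 g_{ij}\dot x^i\dot x^j-V_0$, $L_1=-V_1$) with generator $X=X_0+\varepsilon X_1$ is one for which there exist functions $f_A(t,x^k)$, $A=0,1$, such that \[ \left(X_0^{[1]}+\varepsilon X_1^{[1]}\right)(L_0+\varepsilon L_1)+(L_0+\varepsilon L_1)\frac{d}{dt}(\xi_0+\varepsilon\xi_1)-\frac{d}{dt}(f_0+\varepsilon f_1)=O(\varepsilon^2), \] where $X_A^{[1]}=\xi_A\partial_t+\eta_A^i\partial_i+(\dot\eta_A^i-\dot x^i\dot\xi_A)\partial_{\dot x^i}$ is the first prolongation and the condition is imposed identically in $t,x^k,\dot x^k$ at orders $\varepsilon^0$ and $\varepsilon^1$. *)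

theory Defs
  imports "HOL-Analysis.Analysis" "HOL-Library.Landau_Symbols"
begin

text \<open>Points of the base space are pairs (t, x) with x in R^n (coordinates x^k,
  index type 'n of class finite); points of the first jet space are triples (t, x, xdot).\<close>

fun iter_dderiv :: "'a::real_normed_vector list \<Rightarrow> ('a \<Rightarrow> 'b::real_normed_vector) \<Rightarrow> 'a \<Rightarrow> 'b" where
  "iter_dderiv [] f = f"
| "iter_dderiv (u # us) f = (\<lambda>p. frechet_derivative (iter_dderiv us f) (at p) u)"

definition smooth :: "('a::real_normed_vector \<Rightarrow> 'b::real_normed_vector) \<Rightarrow> bool" where
  "smooth f \<longleftrightarrow> (\<forall>us p. iter_dderiv us f differentiable (at p))"

text \<open>Total derivative d/dt of a function h(t,x) along the jet (t,x,xdot):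
  h_t + xdot^k \<partial>_k h.\<close>
definition tot_deriv :: "(real \<times> (real^'n) \<Rightarrow> 'b::real_normed_vector) \<Rightarrow> real \<Rightarrow> real^'n \<Rightarrow> real^'n \<Rightarrow> 'b" where
  "tot_deriv h t x v = frechet_derivative h (at (t, x)) (1, v)"

text \<open>First prolongation of X = xi \<partial>_t + eta^i \<partial>_i applied to a function F(t,x,xdot):
  xi F_t + eta^i F_{x^i} + (d eta^i/dt - xdot^i d xi/dt) F_{xdot^i}.\<close>
definition prolong :: "(real \<times> (real^'n) \<Rightarrow> real) \<Rightarrow> (real \<times> (real^'n) \<Rightarrow> real^'n)
    \<Rightarrow> (real \<times> (real^'n) \<times> (real^'n) \<Rightarrow> real) \<Rightarrow> real \<times> (real^'n) \<times> (real^'n) \<Rightarrow> real" where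
  "prolong xi eta F = (\<lambda>(t, x, v). frechet_derivative F (at (t, x, v))
      (xi (t, x), eta (t, x), tot_deriv eta t x v - tot_deriv xi t x v *\<^sub>R v))"

definition lag0 :: "(real^'n \<Rightarrow> real^'n^'n) \<Rightarrow> (real \<times> (real^'n) \<Rightarrow> real) \<Rightarrow> real \<times> (real^'n) \<times> (real^'n) \<Rightarrow> real" where
  "lag0 g V0 = (\<lambda>(t, x, v). (1/2) * (\<Sum>i\<in>UNIV. \<Sum>j\<in>UNIV. g x $ i $ j * v $ i * v $ j) - V0 (t, x))"

definition lag1 :: "(real \<times> (real^'n) \<Rightarrow> real) \<Rightarrow> real \<times> (real^'n) \<times> (real^'n) \<Rightarrow> real" where
  "lag1 V1 = (\<lambda>(t, x, v). - V1 (t, x))"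

definition approx_noether_symmetry ::
  "(real^'n \<Rightarrow> real^'n^'n) \<Rightarrow> (real \<times> (real^'n) \<Rightarrow> real) \<Rightarrow> (real \<times> (real^'n) \<Rightarrow> real)
   \<Rightarrow> (real \<times> (real^'n) \<Rightarrow> real) \<Rightarrow> (real \<times> (real^'n) \<Rightarrow> real^'n)
   \<Rightarrow> (real \<times> (real^'n) \<Rightarrow> real) \<Rightarrow> (real \<times> (real^'n) \<Rightarrow> real^'n) \<Rightarrow> bool" where
  "approx_noether_symmetry g V0 V1 xi0 eta0 xi1 eta1 \<longleftrightarrow>
     smooth xi0 \<and> smooth eta0 \<and> smooth xi1 \<and> smooth eta1 \<and>
     (\<exists>f0 f1 :: real \<times> (real^'n) \<Rightarrow> real. smooth f0 \<and> smooth f1 \<and>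
       (\<forall>t x v.
          (\<lambda>\<epsilon>::real.
              let L = (\<lambda>q. lag0 g V0 q + \<epsilon> * lag1 V1 q) in
              prolong xi0 eta0 L (t, x, v) + \<epsilon> * prolong xi1 eta1 L (t, x, v)
              + L (t, x, v) * tot_deriv (\<lambda>p. xi0 p + \<epsilon> * xi1 p) t x v
              - tot_deriv (\<lambda>p. f0 p + \<epsilon> * f1 p) t x v)
          \<in> O[at 0](\<lambda>\<epsilon>. \<epsilon> ^ 2)))"

definition lie_metric :: "(real^'n \<Rightarrow> real^'n) \<Rightarrow> (real^'n \<Rightarrow> real^'n^'n) \<Rightarrow> real^'n \<Rightarrow> real^'n^'n" where
  "lie_metric Y g x = (\<chi> i j.
      (\<Sum>k\<in>UNIV. Y x $ k * frechet_derivative g (at x) (axis k 1) $ i $ j)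
    + (\<Sum>k\<in>UNIV. g x $ k $ j * frechet_derivative Y (at x) (axis i 1) $ k)
    + (\<Sum>k\<in>UNIV. g x $ i $ k * frechet_derivative Y (at x) (axis j 1) $ k))"

definition homothetic :: "(real^'n \<Rightarrow> real^'n) \<Rightarrow> (real^'n \<Rightarrow> real^'n^'n) \<Rightarrow> real \<Rightarrow> bool" where
  "homothetic Y g psi \<longleftrightarrow> (\<forall>x. lie_metric Y g x = (2 * psi) *\<^sub>R g x)"

end

theory Submission
  imports Defs
begin


lemma smooth_diff: "smooth f \<Longrightarrow> (f has_derivative frechet_derivative f (at p)) (at p)"
  unfolding smooth_def using frechet_derivative_works
  by (metis iter_dderiv.simps(1))

lemma vnth_deriv: "(f has_derivative f') F \<Longrightarrow> ((\<lambda>x. f x $ i) has_derivative (\<lambda>h. f' h $ i)) F"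
  using bounded_linear.has_derivative[OF bounded_linear_vec_nth] by blast

lemma chain_at: "(f has_derivative f') (at p) \<Longrightarrow> f p = y \<Longrightarrow> (h has_derivative h') (at y) \<Longrightarrow> ((\<lambda>q. h (f q)) has_derivative (\<lambda>q. h' (f' q))) (at p)"
  using has_derivative_compose by blast

lemma lag_deriv:
  fixes g :: "real^'n \<Rightarrow> real^'n^'n"
  assumes "smooth g" "smooth V0" "smooth V1"
  shows "((\<lambda>q. lag0 g V0 q + e * lag1 V1 q) has_derivative
     (\<lambda>(dt,dx,dv). (1/2)*(\<Sum>i\<in>UNIV. \<Sum>j\<in>UNIV. (frechet_derivative g (at x) dx $i$j * v$i* v$j
        + g x$i$j*dv$i* v$j + g x$i$j* v$i*dv$j))
      - frechet_derivative V0 (at (t,x)) (dt,dx) - e * frechet_derivative V1 (at (t,x)) (dt,dx))) (at (t,x,v))"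
proof -
  have G: "((\<lambda>q. g (fst (snd q))) has_derivative (\<lambda>q. frechet_derivative g (at x) (fst (snd q)))) (at (t,x,v))"
    by (rule chain_at[OF _ _ smooth_diff[OF assms(1)]]) (auto intro!: derivative_eq_intros)
  have V0: "((\<lambda>q. V0 (fst q, fst (snd q))) has_derivative (\<lambda>q. frechet_derivative V0 (at (t,x)) (fst q, fst (snd q)))) (at (t,x,v))"
    by (rule chain_at[OF _ _ smooth_diff[OF assms(2)]]) (auto intro!: derivative_eq_intros)
  have V1: "((\<lambda>q. V1 (fst q, fst (snd q))) has_derivative (\<lambda>q. frechet_derivative V1 (at (t,x)) (fst q, fst (snd q)))) (at (t,x,v))"
    by (rule chain_at[OF _ _ smooth_diff[OF assms(3)]]) (auto intro!: derivative_eq_intros)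
  have GIJ: "\<And>i j. ((\<lambda>q. g (fst (snd q)) $ i $ j) has_derivative (\<lambda>q. frechet_derivative g (at x) (fst (snd q)) $ i $ j)) (at (t,x,v))"
    by (intro vnth_deriv G)
  have VI: "\<And>i. ((\<lambda>q. snd (snd q) $ i) has_derivative (\<lambda>q. snd (snd q) $ i)) (at (t,x,v))"
    by (intro vnth_deriv derivative_intros)
  show ?thesis
    unfolding lag0_def lag1_def split_def
    apply (rule has_derivative_eq_rhs)
     apply (rule GIJ VI V0 V1 derivative_intros)+
    apply (auto simp: fun_eq_iff algebra_simps sum_distrib_left sum.distrib)
    done
qed



definition B3 :: "real^'n^'n \<Rightarrow> real^'n \<Rightarrow> real^'n \<Rightarrow> real" where
  "B3 M u w = (\<Sum>i\<in>UNIV. \<Sum>j\<in>UNIV. M$i$j * u$i * w$j)"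

lemma B3_simps:
  "B3 M (u1 + u2) w = B3 M u1 w + B3 M u2 w"
  "B3 M u (w1 + w2) = B3 M u w1 + B3 M u w2"
  "B3 M (u1 - u2) w = B3 M u1 w - B3 M u2 w"
  "B3 M u (w1 - w2) = B3 M u w1 - B3 M u w2"
  "B3 M (c *\<^sub>R u) w = c * B3 M u w"
  "B3 M u (c *\<^sub>R w) = c * B3 M u w"
  unfolding B3_def
  by (simp_all add: algebra_simps sum.distrib sum_subtractf sum_distrib_left)

lemma B3_axis: "B3 M (axis i 1) (axis j 1) = M$i$j"
proof -
  have "B3 M (axis i 1) (axis j 1) = (\<Sum>a\<in>UNIV. \<Sum>b\<in>UNIV. (if a = i then (if b = j then M$a$b else 0) else 0))"
    unfolding B3_def by (intro sum.cong refl) (simp add: axis_def)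
  also have "\<dots> = (\<Sum>a\<in>UNIV. (if a = i then M$a$j else 0))"
    by (intro sum.cong refl) auto
  also have "\<dots> = M$i$j" by simp
  finally show ?thesis .
qed

lemma poly3_zero:
  fixes c0 c1 c2 c3 :: real
  assumes "\<And>s. c0 + s*c1 + s^2*c2 + s^3*c3 = 0"
  shows "c0 = 0 \<and> c1 = 0 \<and> c2 = 0 \<and> c3 = 0"
proof -
  have "c0 + 0*c1 + 0^2*c2 + 0^3*c3 = 0" by (rule assms)
  moreover have "c0 + 1*c1 + 1^2*c2 + 1^3*c3 = 0" by (rule assms)
  moreover have "c0 + (-1)*c1 + (-1)^2*c2 + (-1)^3*c3 = 0" by (rule assms)
  moreover have "c0 + 2*c1 + 2^2*c2 + 2^3*c3 = 0" by (rule assms)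
  ultimately show ?thesis by (simp add: power2_eq_square power3_eq_cube; linarith)
qed

lemma polarize:
  fixes M :: "real^'n^'n"
  assumes "transpose M = M" "\<And>v. B3 M v v = 0"
  shows "M = 0"
proof -
  have "M$i$j = 0" for i j
  proof -
    have s: "M$j$i = M$i$j" using assms(1) by (metis transpose_def vec_lambda_beta)
    have "B3 M (axis i 1 + axis j 1) (axis i 1 + axis j 1) = 0" by (rule assms)
    then have "M$i$i + M$i$j + M$j$i + M$j$j = 0" by (simp add: B3_simps B3_axis)
    moreover have "M$i$i = 0" "M$j$j = 0" using assms(2)[of "axis i 1"] assms(2)[of "axis j 1"]
      by (simp_all add: B3_axis)
    ultimately show ?thesis using s by simp
  qed
  then show ?thesis by (simp add: vec_eq_iff)
qed

lemma nondeg: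
  fixes M :: "real^'n^'n" and l :: "real^'n \<Rightarrow> real"
  assumes "transpose M = M" "det M \<noteq> 0" "linear l" "\<And>v. l v * B3 M v v = 0"
  shows "l w = 0"
proof (rule ccontr)
  assume lw: "l w \<noteq> 0"
  have "B3 M u u = 0" for u
  proof -
    have "(l u + s * l w) * (B3 M u u + s * (B3 M u w + B3 M w u) + s^2 * B3 M w w) = 0" for s
      using assms(4)[of "u + s *\<^sub>R w"] assms(3)
      by (simp add: B3_simps linear_add linear_scale algebra_simps power2_eq_square)
    then have "l u * B3 M u u + s * (l u * (B3 M u w + B3 M w u) + l w * B3 M u u)
      + s^2 * (l u * B3 M w w + l w * (B3 M u w + B3 M w u)) + s^3 * (l w * B3 M w w) = 0" for s
      by (simp add: algebra_simps power2_eq_square power3_eq_cube)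
    from poly3_zero[OF this] lw show ?thesis by auto
  qed
  then have "M = 0" by (rule polarize[OF assms(1)])
  then show False using assms(2) by (metis det_0 mat_0)
qed



lemma bigo_coeffs:
  fixes a b c :: real
  assumes "(\<lambda>e. a + e*b + e^2*c) \<in> O[at 0](\<lambda>e. e^2)"
  shows "a = 0 \<and> b = 0"
proof -
  from landau_o.bigE[OF assms] obtain C where ev: "eventually (\<lambda>e. norm (a + e*b + e^2*c) \<le> C * norm (e^2)) (at (0::real))"
    by blast
  have ev1: "eventually (\<lambda>e. \<bar>a + e*b + e^2*c\<bar> - C*\<bar>e^2\<bar> \<le> 0) (at (0::real))"
    using ev by eventually_elim simp
  have "((\<lambda>e. \<bar>a + e*b + e^2*c\<bar> - C*\<bar>e^2\<bar>) \<longlongrightarrow> \<bar>a + 0*b + 0^2*c\<bar> - C*\<bar>0^2\<bar>) (at (0::real))"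
    by (intro tendsto_intros)
  from tendsto_upperbound[OF this ev1] have a0: "a = 0" by simp
  have ev2: "eventually (\<lambda>e. \<bar>b + e*c\<bar> - C*\<bar>e\<bar> \<le> 0) (at (0::real))"
    using ev eventually_neq_at_within[of 0 0 UNIV]
  proof eventually_elim
    case (elim e)
    then have "\<bar>e\<bar> * \<bar>b + e*c\<bar> \<le> \<bar>e\<bar> * (C*\<bar>e\<bar>)"
      using a0 by (simp add: abs_mult[symmetric] algebra_simps power2_eq_square)
    then show ?case using elim by simp
  qed
  have "((\<lambda>e. \<bar>b + e*c\<bar> - C*\<bar>e\<bar>) \<longlongrightarrow> \<bar>b + 0*c\<bar> - C*\<bar>0\<bar>) (at (0::real))"
    by (intro tendsto_intros)
  from tendsto_upperbound[OF this ev2] have "b = 0" by simp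
  with a0 show ?thesis by simp
qed



lemma lag_deriv':
  fixes g :: "real^'n \<Rightarrow> real^'n^'n"
  assumes "smooth g" "smooth V0" "smooth V1"
  shows "frechet_derivative (\<lambda>q. lag0 g V0 q + e * lag1 V1 q) (at (t,x,v)) =
     (\<lambda>(dt,dx,dv). (1/2)*(B3 (frechet_derivative g (at x) dx) v v + B3 (g x) dv v + B3 (g x) v dv)
      - frechet_derivative V0 (at (t,x)) (dt,dx) - e * frechet_derivative V1 (at (t,x)) (dt,dx))"
proof -
  have "((\<lambda>q. lag0 g V0 q + e * lag1 V1 q) has_derivative
     (\<lambda>(dt,dx,dv). (1/2)*(B3 (frechet_derivative g (at x) dx) v v + B3 (g x) dv v + B3 (g x) v dv)
      - frechet_derivative V0 (at (t,x)) (dt,dx) - e * frechet_derivative V1 (at (t,x)) (dt,dx))) (at (t,x,v))"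
    apply (rule has_derivative_eq_rhs[OF lag_deriv[OF assms]])
    apply (simp add: fun_eq_iff B3_def sum.distrib split_def)
    done
  then show ?thesis by (rule frechet_derivative_at[symmetric])
qed

lemma tot_deriv_lin:
  fixes xi0 xi1 :: "real \<times> (real^'n) \<Rightarrow> real" and e :: real
  assumes "smooth xi0" "smooth xi1"
  shows "tot_deriv (\<lambda>p. xi0 p + e * xi1 p) t x v = tot_deriv xi0 t x v + e * tot_deriv xi1 t x v"
proof -
  have "((\<lambda>p. xi0 p + e * xi1 p) has_derivative (\<lambda>h. frechet_derivative xi0 (at (t,x)) h + e * frechet_derivative xi1 (at (t,x)) h)) (at (t,x))"
    by (intro has_derivative_add has_derivative_mult_right smooth_diff assms)
  then show ?thesis unfolding tot_deriv_def by (simp add: frechet_derivative_at[symmetric])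
qed

definition Kf :: "(real^'n \<Rightarrow> real^'n^'n) \<Rightarrow> (real \<times> (real^'n) \<Rightarrow> real) \<Rightarrow> (real \<times> (real^'n) \<Rightarrow> real^'n) \<Rightarrow> real \<Rightarrow> real^'n \<Rightarrow> real^'n \<Rightarrow> real" where
  "Kf g xi eta t x v = (1/2)*(B3 (frechet_derivative g (at x) (eta (t,x))) v v
       + B3 (g x) (tot_deriv eta t x v - tot_deriv xi t x v *\<^sub>R v) v
       + B3 (g x) v (tot_deriv eta t x v - tot_deriv xi t x v *\<^sub>R v))
     + (1/2) * B3 (g x) v v * tot_deriv xi t x v"

lemma lag0_B3: "lag0 g V0 (t,x,v) = (1/2)*B3 (g x) v v - V0(t,x)"
  by (simp add: lag0_def B3_def)

lemma E_expand:
  fixes g :: "real^'n \<Rightarrow> real^'n^'n"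
  assumes "smooth g" "smooth V0" "smooth V1" "smooth xi0" "smooth xi1" "smooth f0" "smooth f1"
  shows "(let L = (\<lambda>q. lag0 g V0 q + e * lag1 V1 q) in
              prolong xi0 eta0 L (t, x, v) + e * prolong xi1 eta1 L (t, x, v)
              + L (t, x, v) * tot_deriv (\<lambda>p. xi0 p + e * xi1 p) t x v
              - tot_deriv (\<lambda>p. f0 p + e * f1 p) t x v)
    = (Kf g xi0 eta0 t x v - frechet_derivative V0 (at (t,x)) (xi0 (t,x), eta0 (t,x))
         - V0 (t,x) * tot_deriv xi0 t x v - tot_deriv f0 t x v)
      + e * (Kf g xi1 eta1 t x v - frechet_derivative V0 (at (t,x)) (xi1 (t,x), eta1 (t,x))
         - V0 (t,x) * tot_deriv xi1 t x v - frechet_derivative V1 (at (t,x)) (xi0 (t,x), eta0 (t,x))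
         - V1 (t,x) * tot_deriv xi0 t x v - tot_deriv f1 t x v)
      + e^2 * (- frechet_derivative V1 (at (t,x)) (xi1 (t,x), eta1 (t,x)) - V1 (t,x) * tot_deriv xi1 t x v)"
  unfolding Let_def prolong_def
  apply (simp only: split_conv lag0_B3 lag_deriv'[OF assms(1-3)] tot_deriv_lin[OF assms(4,5)] tot_deriv_lin[OF assms(6,7)])
  apply (simp add: Kf_def lag1_def algebra_simps power2_eq_square)
  done



lemma fd_linear: "smooth f \<Longrightarrow> linear (frechet_derivative f (at p))"
  using smooth_diff has_derivative_bounded_linear bounded_linear.linear by blast

lemma tot_deriv_scale:
  assumes "smooth xi"
  shows "tot_deriv xi t x (s *\<^sub>R v) = frechet_derivative xi (at (t,x)) (1,0) + s *\<^sub>R frechet_derivative xi (at (t,x)) (0,v)"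
proof -
  note lin = fd_linear[OF assms, of "(t,x)"]
  have eq: "(1::real, s *\<^sub>R v) = (1,0) + s *\<^sub>R (0,v)" by simp
  show ?thesis unfolding tot_deriv_def eq
    by (simp only: linear_add[OF lin] linear_scale[OF lin])
qed

lemma Kf_scale:
  fixes g :: "real^'n \<Rightarrow> real^'n^'n" and xi :: "real \<times> (real^'n) \<Rightarrow> real"
  assumes "smooth xi" "smooth eta"
  shows "Kf g xi eta t x (s *\<^sub>R v) =
    s * ((1/2)*(B3 (g x) (frechet_derivative eta (at (t,x)) (1,0)) v + B3 (g x) v (frechet_derivative eta (at (t,x)) (1,0))))
  + s^2 * ((1/2)*(B3 (frechet_derivative g (at x) (eta (t,x))) v v + B3 (g x) (frechet_derivative eta (at (t,x)) (0,v)) v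
        + B3 (g x) v (frechet_derivative eta (at (t,x)) (0,v)) - frechet_derivative xi (at (t,x)) (1,0) * B3 (g x) v v))
  + s^3 * (-(1/2) * frechet_derivative xi (at (t,x)) (0,v) * B3 (g x) v v)"
  unfolding Kf_def tot_deriv_scale[OF assms(1)] tot_deriv_scale[OF assms(2)]
  apply (simp only: scaleR_add_left scaleR_scaleR B3_simps real_scaleR_def)
  apply (simp add: algebra_simps power2_eq_square power3_eq_cube)
  done



lemma lin_expand:
  fixes D :: "real^'n \<Rightarrow> 'b::real_vector"
  assumes "linear D"
  shows "D v = (\<Sum>i\<in>UNIV. v$i *\<^sub>R D (axis i 1))"
proof -
  have "D v = D (\<Sum>i\<in>UNIV. v$i *\<^sub>R axis i 1)"
    using basis_expansion[of v] by (simp add: scalar_mult_eq_scaleR)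
  also have "\<dots> = (\<Sum>i\<in>UNIV. v$i *\<^sub>R D (axis i 1))"
    by (simp add: linear_sum[OF assms] linear_scale[OF assms])
  finally show ?thesis .
qed

lemma comp_lin: "linear D \<Longrightarrow> (D v :: real^'n) $ k = (\<Sum>i\<in>UNIV. v$i * D (axis i 1) $ k)"
  by (subst lin_expand, assumption) simp

lemma comp_lin2: "linear D \<Longrightarrow> (D v :: real^'n^'n) $ i $ j = (\<Sum>k\<in>UNIV. v$k * D (axis k 1) $ i $ j)"
  by (subst lin_expand, assumption) simp

lemma L2:
  fixes G :: "real^'n^'n"
  assumes "linear D"
  shows "(\<Sum>i\<in>UNIV. \<Sum>j\<in>UNIV. (\<Sum>k\<in>UNIV. G$k$j * D (axis i 1) $ k) * v$i * v$j) = B3 G (D v) v"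
proof -
  have "B3 G (D v) v = (\<Sum>k\<in>UNIV. \<Sum>j\<in>UNIV. \<Sum>i\<in>UNIV. G$k$j * D (axis i 1) $ k * v$i * v$j)"
    unfolding B3_def comp_lin[OF assms, of v]
    by (simp add: sum_distrib_left sum_distrib_right mult_ac)
  also have "\<dots> = (\<Sum>j\<in>UNIV. \<Sum>k\<in>UNIV. \<Sum>i\<in>UNIV. G$k$j * D (axis i 1) $ k * v$i * v$j)"
    by (rule sum.swap)
  also have "\<dots> = (\<Sum>j\<in>UNIV. \<Sum>i\<in>UNIV. \<Sum>k\<in>UNIV. G$k$j * D (axis i 1) $ k * v$i * v$j)"
    by (rule sum.cong[OF refl], rule sum.swap)
  also have "\<dots> = (\<Sum>i\<in>UNIV. \<Sum>j\<in>UNIV. \<Sum>k\<in>UNIV. G$k$j * D (axis i 1) $ k * v$i * v$j)"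
    by (rule sum.swap)
  also have "\<dots> = (\<Sum>i\<in>UNIV. \<Sum>j\<in>UNIV. (\<Sum>k\<in>UNIV. G$k$j * D (axis i 1) $ k) * v$i * v$j)"
    by (simp add: sum_distrib_right)
  finally show ?thesis by simp
qed

lemma L3:
  fixes G :: "real^'n^'n"
  assumes "linear D"
  shows "(\<Sum>i\<in>UNIV. \<Sum>j\<in>UNIV. (\<Sum>k\<in>UNIV. G$i$k * D (axis j 1) $ k) * v$i * v$j) = B3 G v (D v)"
proof -
  have "B3 G v (D v) = (\<Sum>i\<in>UNIV. \<Sum>k\<in>UNIV. \<Sum>j\<in>UNIV. G$i$k * D (axis j 1) $ k * v$i * v$j)"
    unfolding B3_def comp_lin[OF assms, of v]
    by (simp add: sum_distrib_left sum_distrib_right mult_ac)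
  also have "\<dots> = (\<Sum>i\<in>UNIV. \<Sum>j\<in>UNIV. \<Sum>k\<in>UNIV. G$i$k * D (axis j 1) $ k * v$i * v$j)"
    by (rule sum.cong[OF refl], rule sum.swap)
  also have "\<dots> = (\<Sum>i\<in>UNIV. \<Sum>j\<in>UNIV. (\<Sum>k\<in>UNIV. G$i$k * D (axis j 1) $ k) * v$i * v$j)"
    by (simp add: sum_distrib_right)
  finally show ?thesis by simp
qed

lemma B3_lie:
  fixes g :: "real^'n \<Rightarrow> real^'n^'n" and Y :: "real^'n \<Rightarrow> real^'n"
  assumes "linear (frechet_derivative g (at x))" "linear (frechet_derivative Y (at x))"
  shows "B3 (lie_metric Y g x) v v = B3 (frechet_derivative g (at x) (Y x)) v v
     + B3 (g x) (frechet_derivative Y (at x) v) v + B3 (g x) v (frechet_derivative Y (at x) v)"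
proof -
  have "B3 (lie_metric Y g x) v v =
     (\<Sum>i\<in>UNIV. \<Sum>j\<in>UNIV. (\<Sum>k\<in>UNIV. Y x $ k * frechet_derivative g (at x) (axis k 1) $ i $ j) * v$i * v$j)
   + (\<Sum>i\<in>UNIV. \<Sum>j\<in>UNIV. (\<Sum>k\<in>UNIV. g x $k$j * frechet_derivative Y (at x) (axis i 1) $ k) * v$i * v$j)
   + (\<Sum>i\<in>UNIV. \<Sum>j\<in>UNIV. (\<Sum>k\<in>UNIV. g x $i$k * frechet_derivative Y (at x) (axis j 1) $ k) * v$i * v$j)"
    unfolding B3_def lie_metric_def by (simp add: sum.distrib algebra_simps)
  also have "\<dots> = B3 (frechet_derivative g (at x) (Y x)) v v
     + B3 (g x) (frechet_derivative Y (at x) v) v + B3 (g x) v (frechet_derivative Y (at x) v)"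
    unfolding L2[OF assms(2)] L3[OF assms(2)] comp_lin2[OF assms(1), of "Y x"] B3_def by simp
  finally show ?thesis .
qed



lemma key_poly:
  fixes g :: "real^'n \<Rightarrow> real^'n^'n" and xi :: "real \<times> (real^'n) \<Rightarrow> real"
  assumes "smooth xi" "smooth eta"
    and K: "\<And>v. Kf g xi eta t x v + R v = 0"
    and Rs: "\<And>v s. R (s *\<^sub>R v) = rc + s * rl v"
  shows "frechet_derivative xi (at (t,x)) (0,v) * B3 (g x) v v = 0"
    and "B3 (frechet_derivative g (at x) (eta (t,x))) v v + B3 (g x) (frechet_derivative eta (at (t,x)) (0,v)) v
        + B3 (g x) v (frechet_derivative eta (at (t,x)) (0,v)) - frechet_derivative xi (at (t,x)) (1,0) * B3 (g x) v v = 0"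
proof -
  have "rc + s * ((1/2)*(B3 (g x) (frechet_derivative eta (at (t,x)) (1,0)) v + B3 (g x) v (frechet_derivative eta (at (t,x)) (1,0))) + rl v)
  + s^2 * ((1/2)*(B3 (frechet_derivative g (at x) (eta (t,x))) v v + B3 (g x) (frechet_derivative eta (at (t,x)) (0,v)) v
        + B3 (g x) v (frechet_derivative eta (at (t,x)) (0,v)) - frechet_derivative xi (at (t,x)) (1,0) * B3 (g x) v v))
  + s^3 * (-(1/2) * frechet_derivative xi (at (t,x)) (0,v) * B3 (g x) v v) = 0" for s
    using K[of "s *\<^sub>R v"] unfolding Kf_scale[OF assms(1,2)] Rs by (simp add: algebra_simps)
  from poly3_zero[OF this] show "frechet_derivative xi (at (t,x)) (0,v) * B3 (g x) v v = 0"
    and "B3 (frechet_derivative g (at x) (eta (t,x))) v v + B3 (g x) (frechet_derivative eta (at (t,x)) (0,v)) v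
        + B3 (g x) v (frechet_derivative eta (at (t,x)) (0,v)) - frechet_derivative xi (at (t,x)) (1,0) * B3 (g x) v v = 0"
    by auto
qed

lemma slice_deriv:
  assumes "smooth f"
  shows "((\<lambda>y. f (t,y)) has_derivative (\<lambda>w. frechet_derivative f (at (t,y)) (0,w))) (at y)"
  by (rule chain_at[OF _ _ smooth_diff[OF assms]]) (auto intro!: derivative_eq_intros)

lemma tslice_deriv:
  assumes "smooth f"
  shows "((\<lambda>s. f (s,y)) has_derivative (\<lambda>h. frechet_derivative f (at (t,y)) (h,0))) (at t)"
  by (rule chain_at[OF _ _ smooth_diff[OF assms]]) (auto intro!: derivative_eq_intros)

lemma xi_const:
  fixes g :: "real^'n \<Rightarrow> real^'n^'n" and xi :: "real \<times> (real^'n) \<Rightarrow> real"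
  assumes "smooth xi" "\<forall>x. transpose (g x) = g x" "\<forall>x. det (g x) \<noteq> 0"
    and C3: "\<And>t x v. frechet_derivative xi (at (t,x)) (0,v) * B3 (g x) v v = 0"
  shows "\<exists>tau. (\<forall>t x. xi (t,x) = tau t) \<and> (\<forall>t x. deriv tau t = frechet_derivative xi (at (t,x)) (1,0))"
proof -
  have z: "frechet_derivative xi (at (t,x)) (0,w) = 0" for t x w
  proof (rule nondeg[of "g x"])
    show "linear (\<lambda>w. frechet_derivative xi (at (t,x)) (0,w))"
      using has_derivative_bounded_linear[OF slice_deriv[OF assms(1)]] bounded_linear.linear by blast
  qed (use assms C3 in auto)
  have c: "xi (t,x) = xi (t,0)" for t x
  proof -
    have "\<exists>c. \<forall>y\<in>UNIV. xi (t,y) = c"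
      by (rule has_derivative_zero_constant) (use slice_deriv[OF assms(1)] z in auto)
    then show ?thesis by auto
  qed
  define tau where "tau t = xi (t,0)" for t
  have d: "deriv tau t = frechet_derivative xi (at (t,x)) (1,0)" for t x
  proof -
    have lin: "linear (frechet_derivative xi (at (t,x)))" by (rule fd_linear[OF assms(1)])
    have "((\<lambda>s. xi (s,x)) has_derivative (\<lambda>h. frechet_derivative xi (at (t,x)) (h,0))) (at t)"
      by (rule tslice_deriv[OF assms(1)])
    moreover have "(\<lambda>s. xi (s,x)) = tau" using c by (auto simp: tau_def)
    moreover have "(\<lambda>h. frechet_derivative xi (at (t,x)) (h,0)) = (\<lambda>h. frechet_derivative xi (at (t,x)) (1,0) * h)"
    proof
      fix h :: real
      have "frechet_derivative xi (at (t,x)) (h,0) = frechet_derivative xi (at (t,x)) (h *\<^sub>R (1,0))" by simp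
      also have "\<dots> = h *\<^sub>R frechet_derivative xi (at (t,x)) (1,0)" by (rule linear_scale[OF lin])
      finally show "frechet_derivative xi (at (t,x)) (h,0) = frechet_derivative xi (at (t,x)) (1,0) * h"
        by simp
    qed
    ultimately have "(tau has_derivative (\<lambda>h. frechet_derivative xi (at (t,x)) (1,0) * h)) (at t)"
      by metis
    then have "(tau has_field_derivative frechet_derivative xi (at (t,x)) (1,0)) (at t)"
      unfolding has_field_derivative_def by (simp add: fun_eq_iff)
    then show ?thesis by (rule DERIV_imp_deriv)
  qed
  show ?thesis
    by (rule exI[of _ tau]) (use c d in \<open>auto simp: tau_def\<close>)
qed



lemma B3_lin_M: "B3 (M1 - c *\<^sub>R M2) u w = B3 M1 u w - c * B3 M2 u w"
  unfolding B3_def by (simp add: algebra_simps sum_subtractf sum_distrib_left)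

lemma homo:
  fixes g :: "real^'n \<Rightarrow> real^'n^'n" and eta :: "real \<times> (real^'n) \<Rightarrow> real^'n"
  assumes "smooth g" "smooth eta" "\<forall>x. transpose (g x) = g x"
    and C2: "\<And>x v. B3 (frechet_derivative g (at x) (eta (t,x))) v v + B3 (g x) (frechet_derivative eta (at (t,x)) (0,v)) v
        + B3 (g x) v (frechet_derivative eta (at (t,x)) (0,v)) - c * B3 (g x) v v = 0"
  shows "homothetic (\<lambda>x. eta (t,x)) g (c/2)"
  unfolding homothetic_def
proof
  fix x
  define Y where "Y = (\<lambda>x. eta (t,x))"
  have hY: "(Y has_derivative (\<lambda>w. frechet_derivative eta (at (t,x)) (0,w))) (at x)"
    unfolding Y_def by (rule slice_deriv[OF assms(2)])
  have fdY: "frechet_derivative Y (at x) = (\<lambda>w. frechet_derivative eta (at (t,x)) (0,w))"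
    using frechet_derivative_at[OF hY] by simp
  have linY: "linear (frechet_derivative Y (at x))"
    unfolding fdY using has_derivative_bounded_linear[OF hY] bounded_linear.linear by blast
  have ling: "linear (frechet_derivative g (at x))" by (rule fd_linear[OF assms(1)])
  have gs: "g y $ i $ j = g y $ j $ i" for y i j
    using assms(3) by (metis transpose_def vec_lambda_beta)
  have Dgs: "frechet_derivative g (at x) h $ i $ j = frechet_derivative g (at x) h $ j $ i" for h i j
  proof -
    have d1: "((\<lambda>y. g y $ i $ j) has_derivative (\<lambda>h. frechet_derivative g (at x) h $ i $ j)) (at x)"
      by (intro vnth_deriv smooth_diff assms(1))
    have d2: "((\<lambda>y. g y $ j $ i) has_derivative (\<lambda>h. frechet_derivative g (at x) h $ j $ i)) (at x)"
      by (intro vnth_deriv smooth_diff assms(1))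
    have "(\<lambda>y. g y $ i $ j) = (\<lambda>y. g y $ j $ i)" using gs by auto
    with d1 d2 have "(\<lambda>h. frechet_derivative g (at x) h $ i $ j) = (\<lambda>h. frechet_derivative g (at x) h $ j $ i)"
      using has_derivative_unique by metis
    then show ?thesis by metis
  qed
  define N where "N = lie_metric Y g x - c *\<^sub>R g x"
  have tN: "transpose N = N"
    unfolding N_def transpose_def lie_metric_def
    by (simp add: vec_eq_iff Dgs gs)
  have "B3 N v v = 0" for v
    unfolding N_def B3_lin_M B3_lie[OF ling linY]
    using C2[of x v] by (simp only: fdY) (simp add: Y_def)
  then have "N = 0" by (rule polarize[OF tN])
  then show "lie_metric (\<lambda>x. eta (t, x)) g x = (2 * (c / 2)) *\<^sub>R g x"
    unfolding N_def Y_def by simp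
qed



theorem theorem1:
  fixes g :: "real^'n \<Rightarrow> real^'n^'n"
    and V0 V1 :: "real \<times> (real^'n) \<Rightarrow> real"
    and xi0 xi1 :: "real \<times> (real^'n) \<Rightarrow> real"
    and eta0 eta1 :: "real \<times> (real^'n) \<Rightarrow> real^'n"
  assumes "smooth g"
    and "\<forall>x. transpose (g x) = g x"
    and "\<forall>x. det (g x) \<noteq> 0"
    and "smooth V0" and "smooth V1"
    and "approx_noether_symmetry g V0 V1 xi0 eta0 xi1 eta1"
  shows "\<exists>tau0 tau1 :: real \<Rightarrow> real.
           (\<forall>t x. xi0 (t, x) = tau0 t) \<and> (\<forall>t x. xi1 (t, x) = tau1 t) \<and>
           (\<forall>t. homothetic (\<lambda>x. eta0 (t, x)) g (deriv tau0 t / 2)) \<and>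
           (\<forall>t. homothetic (\<lambda>x. eta1 (t, x)) g (deriv tau1 t / 2))"
proof -
  from assms(6) obtain f0 f1 :: "real \<times> (real^'n) \<Rightarrow> real" where
    sm: "smooth xi0" "smooth eta0" "smooth xi1" "smooth eta1" "smooth f0" "smooth f1" and
    H: "\<forall>t x v.
          (\<lambda>\<epsilon>::real.
              let L = (\<lambda>q. lag0 g V0 q + \<epsilon> * lag1 V1 q) in
              prolong xi0 eta0 L (t, x, v) + \<epsilon> * prolong xi1 eta1 L (t, x, v)
              + L (t, x, v) * tot_deriv (\<lambda>p. xi0 p + \<epsilon> * xi1 p) t x v
              - tot_deriv (\<lambda>p. f0 p + \<epsilon> * f1 p) t x v)
          \<in> O[at 0](\<lambda>\<epsilon>. \<epsilon> ^ 2)"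
    unfolding approx_noether_symmetry_def by blast
  note EE = E_expand[OF assms(1,4,5) sm(1,3,5,6)]
  have P: "(Kf g xi0 eta0 t x v - frechet_derivative V0 (at (t,x)) (xi0 (t,x), eta0 (t,x))
         - V0 (t,x) * tot_deriv xi0 t x v - tot_deriv f0 t x v) = 0 \<and>
      (Kf g xi1 eta1 t x v - frechet_derivative V0 (at (t,x)) (xi1 (t,x), eta1 (t,x))
         - V0 (t,x) * tot_deriv xi1 t x v - frechet_derivative V1 (at (t,x)) (xi0 (t,x), eta0 (t,x))
         - V1 (t,x) * tot_deriv xi0 t x v - tot_deriv f1 t x v) = 0" for t x v
    by (rule bigo_coeffs) (use H[rule_format, of t x v] in \<open>simp only: EE\<close>)
  have C0: "frechet_derivative xi0 (at (t,x)) (0,v) * B3 (g x) v v = 0 \<and>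
      B3 (frechet_derivative g (at x) (eta0 (t,x))) v v + B3 (g x) (frechet_derivative eta0 (at (t,x)) (0,v)) v
        + B3 (g x) v (frechet_derivative eta0 (at (t,x)) (0,v)) - frechet_derivative xi0 (at (t,x)) (1,0) * B3 (g x) v v = 0"
    for t x v
  proof -
    have K: "Kf g xi0 eta0 t x w + (- frechet_derivative V0 (at (t,x)) (xi0 (t,x), eta0 (t,x))
         - V0 (t,x) * tot_deriv xi0 t x w - tot_deriv f0 t x w) = 0" for w
      using P[of t x w] by (simp add: algebra_simps)
    have Rs: "\<And>w s. - frechet_derivative V0 (at (t,x)) (xi0 (t,x), eta0 (t,x))
         - V0 (t,x) * tot_deriv xi0 t x (s *\<^sub>R w) - tot_deriv f0 t x (s *\<^sub>R w) =
       - frechet_derivative V0 (at (t,x)) (xi0 (t,x), eta0 (t,x))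
         - V0 (t,x) * frechet_derivative xi0 (at (t,x)) (1,0) - frechet_derivative f0 (at (t,x)) (1,0)
       + s * (- V0 (t,x) * frechet_derivative xi0 (at (t,x)) (0,w) - frechet_derivative f0 (at (t,x)) (0,w))"
      unfolding tot_deriv_scale[OF sm(1)] tot_deriv_scale[OF sm(5)] by (simp add: algebra_simps)
    from key_poly[OF _ _ K Rs] sm show ?thesis by blast
  qed
  have C1: "frechet_derivative xi1 (at (t,x)) (0,v) * B3 (g x) v v = 0 \<and>
      B3 (frechet_derivative g (at x) (eta1 (t,x))) v v + B3 (g x) (frechet_derivative eta1 (at (t,x)) (0,v)) v
        + B3 (g x) v (frechet_derivative eta1 (at (t,x)) (0,v)) - frechet_derivative xi1 (at (t,x)) (1,0) * B3 (g x) v v = 0"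
    for t x v
  proof -
    have K: "Kf g xi1 eta1 t x w + (- frechet_derivative V0 (at (t,x)) (xi1 (t,x), eta1 (t,x))
         - V0 (t,x) * tot_deriv xi1 t x w - frechet_derivative V1 (at (t,x)) (xi0 (t,x), eta0 (t,x))
         - V1 (t,x) * tot_deriv xi0 t x w - tot_deriv f1 t x w) = 0" for w
      using P[of t x w] by (simp add: algebra_simps)
    have Rs: "\<And>w s. - frechet_derivative V0 (at (t,x)) (xi1 (t,x), eta1 (t,x))
         - V0 (t,x) * tot_deriv xi1 t x (s *\<^sub>R w) - frechet_derivative V1 (at (t,x)) (xi0 (t,x), eta0 (t,x))
         - V1 (t,x) * tot_deriv xi0 t x (s *\<^sub>R w) - tot_deriv f1 t x (s *\<^sub>R w) =
       - frechet_derivative V0 (at (t,x)) (xi1 (t,x), eta1 (t,x))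
         - V0 (t,x) * frechet_derivative xi1 (at (t,x)) (1,0) - frechet_derivative V1 (at (t,x)) (xi0 (t,x), eta0 (t,x))
         - V1 (t,x) * frechet_derivative xi0 (at (t,x)) (1,0) - frechet_derivative f1 (at (t,x)) (1,0)
       + s * (- V0 (t,x) * frechet_derivative xi1 (at (t,x)) (0,w) - V1 (t,x) * frechet_derivative xi0 (at (t,x)) (0,w)
          - frechet_derivative f1 (at (t,x)) (0,w))"
      unfolding tot_deriv_scale[OF sm(1)] tot_deriv_scale[OF sm(3)] tot_deriv_scale[OF sm(6)]
      by (simp add: algebra_simps)
    from key_poly[OF _ _ K Rs] sm show ?thesis by blast
  qed
  obtain tau0 where T0: "\<forall>t x. xi0 (t,x) = tau0 t" "\<forall>t x. deriv tau0 t = frechet_derivative xi0 (at (t,x)) (1,0)"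
    using xi_const[OF sm(1) assms(2,3)] C0 by blast
  obtain tau1 where T1: "\<forall>t x. xi1 (t,x) = tau1 t" "\<forall>t x. deriv tau1 t = frechet_derivative xi1 (at (t,x)) (1,0)"
    using xi_const[OF sm(3) assms(2,3)] C1 by blast
  have H0: "homothetic (\<lambda>x. eta0 (t, x)) g (deriv tau0 t / 2)" for t
    by (rule homo[OF assms(1) sm(2) assms(2)]) (use C0 T0(2) in metis)
  have H1: "homothetic (\<lambda>x. eta1 (t, x)) g (deriv tau1 t / 2)" for t
    by (rule homo[OF assms(1) sm(4) assms(2)]) (use C1 T1(2) in metis)
  show ?thesis using T0(1) T1(1) H0 H1 by blast
qed

end
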